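(* Let $\mathcal{C}$ be a unimodular simplicial complex on ground set $[n]$. Then for every face $S$ of $\mathcal{C}$, the link $\operatorname{link}_S(\mathcal{C})$ is unimodular.
   Context: A simplicial complex on $[n]$ is a family of subsets of $[n]$ closed under subsets; facets are inclusion-maximal faces. For a face $S$, $\operatorname{link}_S(\mathcal{C})=\{F\setminus S: F\in\mathcal{C}, S\subseteq F\}$, a complex on ground set $[n]\setminus S$. $\mathcal{A}_{\mathcal{C}}$ is the $0/1$ matrix with columns indexed by $\mathbf{i}\in\{1,2\}^n$ and rows indexed by pairs $(F,\mathbf{e})$, $F$ a facet, $\mathbf{e}\in\{1,2\}^F$; entry $1$ iff $\mathbf{e}=\mathbf{i}|_F$. An integer matrix is unimodular if every circuit (nonzero integer kernel vector with coprime entries and inclusion-minimal support) has entries in $\{0,\pm1\}$; $\mathcal{C}$ is unimodular if $\mathcal{A}_{\mathcal{C}}$ is. *)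

theory Defs
  imports Main "HOL-Library.FuncSet"
begin

definition simplicial_complex :: "nat set \<Rightarrow> nat set set \<Rightarrow> bool" where
  "simplicial_complex V C \<longleftrightarrow> (\<forall>F\<in>C. F \<subseteq> V) \<and> (\<forall>F\<in>C. \<forall>G. G \<subseteq> F \<longrightarrow> G \<in> C)"

definition facets :: "nat set set \<Rightarrow> nat set set" where
  "facets C = {F \<in> C. \<forall>G\<in>C. F \<subseteq> G \<longrightarrow> G = F}"

definition link :: "nat set \<Rightarrow> nat set set \<Rightarrow> nat set set" where
  "link S C = {F - S | F. F \<in> C \<and> S \<subseteq> F}"

text \<open>Columns of A_C: vectors i in {1,2}^V (extensional functions).\<close>
definition cols :: "nat set \<Rightarrow> (nat \<Rightarrow> nat) set" where
  "cols V = (PiE V (\<lambda>_. {1,2}))"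

text \<open>An integer vector indexed by the columns (zero outside) lies in the kernel of A_C:
  for every row (F,e), F a facet and e in {1,2}^F, the sum of u over the columns i with
  i restricted to F equal to e vanishes.\<close>
definition in_kernel :: "nat set \<Rightarrow> nat set set \<Rightarrow> ((nat \<Rightarrow> nat) \<Rightarrow> int) \<Rightarrow> bool" where
  "in_kernel V C u \<longleftrightarrow> (\<forall>x. x \<notin> cols V \<longrightarrow> u x = 0) \<and>
     (\<forall>F\<in>facets C. \<forall>e\<in>PiE F (\<lambda>_. {1,2}).
        (\<Sum>i\<in>cols V. (if restrict i F = e then u i else 0)) = 0)"

definition supp :: "((nat \<Rightarrow> nat) \<Rightarrow> int) \<Rightarrow> (nat \<Rightarrow> nat) set" where
  "supp u = {x. u x \<noteq> 0}"

definition circuit :: "nat set \<Rightarrow> nat set set \<Rightarrow> ((nat \<Rightarrow> nat) \<Rightarrow> int) \<Rightarrow> bool" where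
  "circuit V C u \<longleftrightarrow> in_kernel V C u \<and> supp u \<noteq> {} \<and> Gcd (u ` cols V) = 1 \<and>
     \<not> (\<exists>v. in_kernel V C v \<and> supp v \<noteq> {} \<and> supp v \<subset> supp u)"

definition unimodular_complex :: "nat set \<Rightarrow> nat set set \<Rightarrow> bool" where
  "unimodular_complex V C \<longleftrightarrow> (\<forall>u. circuit V C u \<longrightarrow> (\<forall>x. u x \<in> {-1, 0, 1}))"

end

theory Submission
  imports Defs
begin

definition merge :: "nat set \<Rightarrow> (nat \<Rightarrow> nat) \<Rightarrow> (nat \<Rightarrow> nat) \<Rightarrow> nat \<Rightarrow> nat" where
  "merge S j s = (\<lambda>k. if k \<in> S then s k else j k)"

lemma finite_cols: "finite V \<Longrightarrow> finite (cols V)"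
  unfolding cols_def by (intro finite_PiE) auto

lemma merge_cols:
  assumes "S \<subseteq> V" "j \<in> cols (V - S)" "s \<in> cols S"
  shows "merge S j s \<in> cols V"
  using assms unfolding cols_def merge_def PiE_def extensional_def Pi_def by auto

lemma restrict_merge_W:
  assumes "j \<in> cols (V - S)"
  shows "restrict (merge S j s) (V - S) = j"
  using assms unfolding cols_def merge_def PiE_def extensional_def restrict_def by (auto simp: fun_eq_iff)

lemma restrict_merge_S:
  assumes "s \<in> cols S"
  shows "restrict (merge S j s) S = s"
  using assms unfolding cols_def merge_def PiE_def extensional_def restrict_def by (auto simp: fun_eq_iff)

lemma merge_restrict:
  assumes "S \<subseteq> V" "i \<in> cols V"
  shows "merge S (restrict i (V - S)) (restrict i S) = i"
  using assms unfolding cols_def merge_def PiE_def extensional_def restrict_def by (auto simp: fun_eq_iff)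

lemma restrict_cols: "i \<in> cols V \<Longrightarrow> A \<subseteq> V \<Longrightarrow> restrict i A \<in> cols A"
  unfolding cols_def by auto

lemma bij_merge:
  assumes "S \<subseteq> V"
  shows "bij_betw (\<lambda>(j,s). merge S j s) (cols (V - S) \<times> cols S) (cols V)"
  apply (rule bij_betw_byWitness[where f'="\<lambda>i. (restrict i (V - S), restrict i S)"])
  using assms by (auto simp: restrict_merge_W restrict_merge_S merge_restrict merge_cols restrict_cols)

lemma bij_merge_fiber:
  assumes "S \<subseteq> V" "s \<in> cols S"
  shows "bij_betw (\<lambda>j. merge S j s) (cols (V - S)) {i \<in> cols V. restrict i S = s}"
  apply (rule bij_betw_byWitness[where f'="\<lambda>i. restrict i (V - S)"])
  using assms by (auto simp: restrict_merge_W restrict_merge_S merge_restrict merge_cols restrict_cols)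

lemma sum_cols_split:
  assumes "S \<subseteq> V" "finite V"
  shows "(\<Sum>i\<in>cols V. f i) = (\<Sum>j\<in>cols (V - S). \<Sum>s\<in>cols S. f (merge S j s))"
proof -
  have "(\<Sum>i\<in>cols V. f i) = (\<Sum>p\<in>cols (V - S) \<times> cols S. f (case p of (j,s) \<Rightarrow> merge S j s))"
    using sum.reindex_bij_betw[OF bij_merge[OF assms(1)], of f] by (simp add: case_prod_unfold)
  also have "\<dots> = (\<Sum>j\<in>cols (V - S). \<Sum>s\<in>cols S. f (merge S j s))"
    by (simp add: sum.cartesian_product case_prod_unfold)
  finally show ?thesis .
qed

lemma in_kernel_lin:
  assumes "in_kernel V C v" "in_kernel V C w"
  shows "in_kernel V C (\<lambda>x. a * v x + b * w x)"
proof -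
  have "(\<Sum>i\<in>cols V. (if restrict i F = e then a * v i + b * w i else 0)) =
     a * (\<Sum>i\<in>cols V. (if restrict i F = e then v i else 0)) + b * (\<Sum>i\<in>cols V. (if restrict i F = e then w i else 0))" for F e
    by (simp add: sum_distrib_left sum.distrib[symmetric] if_distrib cong: if_cong)
  then show ?thesis using assms unfolding in_kernel_def by auto
qed

lemma facet_link_up:
  assumes "G \<in> facets (link S C)" "simplicial_complex V C"
  shows "G \<union> S \<in> facets C \<and> G \<inter> S = {} \<and> G \<subseteq> V - S"
proof -
  obtain F where F: "G = F - S" "F \<in> C" "S \<subseteq> F" using assms(1) unfolding facets_def link_def by auto
  have GS: "G \<union> S = F" using F by auto
  have "\<forall>H\<in>C. F \<subseteq> H \<longrightarrow> H = F"
  proof (intro ballI impI)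
    fix H assume "H \<in> C" "F \<subseteq> H"
    then have "H - S \<in> link S C" using F unfolding link_def by auto
    moreover have "G \<subseteq> H - S" using F \<open>F \<subseteq> H\<close> by auto
    ultimately have "H - S = G" using assms(1) unfolding facets_def by auto
    then show "H = F" using F \<open>F \<subseteq> H\<close> by auto
  qed
  then show ?thesis using F GS assms(2) unfolding facets_def simplicial_complex_def by auto
qed

lemma facet_link_down:
  assumes "F \<in> facets C" "S \<subseteq> F"
  shows "F - S \<in> facets (link S C)"
proof -
  have "F \<in> C" using assms unfolding facets_def by auto
  then have "F - S \<in> link S C" using assms unfolding link_def by auto
  moreover have "\<forall>H\<in>link S C. F - S \<subseteq> H \<longrightarrow> H = F - S"
  proof (intro ballI impI)
    fix H assume "H \<in> link S C" "F - S \<subseteq> H"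
    then obtain K where K: "H = K - S" "K \<in> C" "S \<subseteq> K" unfolding link_def by auto
    then have "F \<subseteq> K" using \<open>F - S \<subseteq> H\<close> assms by auto
    then have "K = F" using assms K unfolding facets_def by auto
    then show "H = F - S" using K by auto
  qed
  ultimately show ?thesis unfolding facets_def by auto
qed

lemma restrict_merge_eq:
  assumes "G \<inter> S = {}" "e \<in> extensional G" "s \<in> extensional S"
  shows "(restrict i (G \<union> S) = merge S e s) \<longleftrightarrow> (restrict i S = s \<and> restrict i G = e)"
proof
  assume h: "restrict i (G \<union> S) = merge S e s"
  have 1: "restrict i S = s"
  proof
    fix x show "restrict i S x = s x" using fun_cong[OF h, of x] assms
      by (cases "x \<in> S") (auto simp: merge_def extensional_def)
  qed
  have 2: "restrict i G = e"
  proof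
    fix x show "restrict i G x = e x" using fun_cong[OF h, of x] assms
      by (cases "x \<in> G") (auto simp: merge_def extensional_def)
  qed
  show "restrict i S = s \<and> restrict i G = e" using 1 2 by simp
next
  assume h: "restrict i S = s \<and> restrict i G = e"
  show "restrict i (G \<union> S) = merge S e s"
  proof
    fix x show "restrict i (G \<union> S) x = merge S e s x"
      using fun_cong[OF conjunct1[OF h], of x] fun_cong[OF conjunct2[OF h], of x] assms
      by (cases "x \<in> S"; cases "x \<in> G") (auto simp: merge_def extensional_def)
  qed
qed

lemma restrict_merge_G:
  assumes "G \<inter> S = {}"
  shows "restrict (merge S j s) G = restrict j G"
  using assms unfolding restrict_def merge_def fun_eq_iff by auto

lemma fiber_kernel:
  assumes sc: "simplicial_complex V C" and fin: "finite V" and SV: "S \<subseteq> V"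
    and k: "in_kernel V C v" and s: "s \<in> cols S"
  shows "in_kernel (V - S) (link S C) (\<lambda>j. if j \<in> cols (V - S) then v (merge S j s) else 0)"
  unfolding in_kernel_def
proof (intro conjI allI impI ballI)
  fix x assume "x \<notin> cols (V - S)" then show "(if x \<in> cols (V - S) then v (merge S x s) else 0) = 0" by simp
next
  fix G :: "nat set" and e :: "nat \<Rightarrow> nat" assume G: "G \<in> facets (link S C)" and e: "e \<in> PiE G (\<lambda>_. {1,2})"
  have up: "G \<union> S \<in> facets C" "G \<inter> S = {}" "G \<subseteq> V - S" using facet_link_up[OF G sc] by auto
  have GSS: "(G \<union> S) - S = G" using up by auto
  have ecol: "e \<in> cols G" using e unfolding cols_def by simp
  have e': "merge S e s \<in> PiE (G \<union> S) (\<lambda>_. {1,2})"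
    using merge_cols[of S "G \<union> S" e s] GSS ecol s unfolding cols_def by auto
  have ker: "(\<Sum>i\<in>cols V. (if restrict i (G \<union> S) = merge S e s then v i else 0)) = 0"
    using k up(1) e' unfolding in_kernel_def by blast
  have exS: "s \<in> extensional S" using s unfolding cols_def by (simp add: PiE_def)
  have exG: "e \<in> extensional G" using e by (simp add: PiE_def)
  have "(\<Sum>j\<in>cols (V - S). (if restrict j G = e then (if j \<in> cols (V - S) then v (merge S j s) else 0) else 0))
      = (\<Sum>j\<in>cols (V - S). (\<lambda>i. if restrict i G = e then v i else 0) (merge S j s))"
    by (rule sum.cong) (auto simp: restrict_merge_G[OF up(2)])
  also have "\<dots> = (\<Sum>i\<in>{i \<in> cols V. restrict i S = s}. (if restrict i G = e then v i else 0))"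
    by (rule sum.reindex_bij_betw[OF bij_merge_fiber[OF SV s]])
  also have "\<dots> = (\<Sum>i\<in>cols V. (if restrict i S = s then (if restrict i G = e then v i else 0) else 0))"
    by (rule sum.inter_filter[OF finite_cols[OF fin]])
  also have "\<dots> = (\<Sum>i\<in>cols V. (if restrict i (G \<union> S) = merge S e s then v i else 0))"
    by (rule sum.cong) (auto simp: restrict_merge_eq[OF up(2) exG exS])
  also have "\<dots> = 0" by (rule ker)
  finally show "(\<Sum>j\<in>cols (V - S). (if restrict j G = e then (if j \<in> cols (V - S) then v (merge S j s) else 0) else 0)) = 0" .
qed

definition phi :: "nat set \<Rightarrow> (nat \<Rightarrow> nat) \<Rightarrow> int" where
  "phi S s = (-1) ^ card {k \<in> S. s k = 2}"

lemma phi_flip: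
  assumes "finite S" "k \<in> S" "s \<in> cols S"
  shows "phi S (s(k := 3 - s k)) = - phi S s"
proof -
  let ?A = "{k' \<in> S. s k' = 2}"
  have fA: "finite ?A" using assms by auto
  have sk: "s k = 1 \<or> s k = 2" using assms unfolding cols_def by auto
  then show ?thesis
  proof
    assume "s k = 1"
    then have eq1: "{k' \<in> S. (s(k := 3 - s k)) k' = 2} = insert k ?A" and nk: "k \<notin> ?A" using assms by auto
    have "phi S (s(k := 3 - s k)) = (-1) ^ card (insert k ?A)" by (simp only: phi_def eq1)
    also have "\<dots> = - phi S s" using fA nk by (simp add: phi_def)
    finally show ?thesis .
  next
    assume "s k = 2"
    then have eq1: "{k' \<in> S. (s(k := 3 - s k)) k' = 2} = ?A - {k}" and kA: "k \<in> ?A" using assms by auto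
    have c: "card ?A = Suc (card (?A - {k}))" using fA kA
      by (metis card.remove)
    have "phi S (s(k := 3 - s k)) = (-1) ^ card (?A - {k})" by (simp only: phi_def eq1)
    moreover have "phi S s = (-1) ^ Suc (card (?A - {k}))" unfolding phi_def using c by simp
    ultimately show ?thesis by simp
  qed
qed

lemma parity_sum:
  assumes "finite S" "k \<in> S" "k \<notin> T"
  shows "(\<Sum>s\<in>cols S. (if restrict s T = e0 then phi S s else 0)) = 0"
proof -
  define t where "t = (\<lambda>s::nat\<Rightarrow>nat. s(k := 3 - s k))"
  have tc: "t s \<in> cols S" if "s \<in> cols S" for s
  proof -
    have "s k = 1 \<or> s k = 2" using that assms unfolding cols_def by auto
    then show ?thesis using that assms unfolding t_def cols_def PiE_def extensional_def Pi_def by auto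
  qed
  have tt: "t (t s) = s" if "s \<in> cols S" for s
  proof -
    have "s k = 1 \<or> s k = 2" using that assms unfolding cols_def by auto
    then show ?thesis unfolding t_def by (auto simp: fun_eq_iff)
  qed
  have bij: "bij_betw t (cols S) (cols S)"
    by (rule bij_betw_byWitness[where f'=t]) (auto simp: tt tc)
  have rt: "restrict (t s) T = restrict s T" for s
    using assms unfolding t_def restrict_def by (auto simp: fun_eq_iff)
  define f where "f = (\<lambda>s. if restrict s T = e0 then phi S s else 0)"
  have "sum f (cols S) = sum (f \<circ> t) (cols S)"
    using sum.reindex_bij_betw[OF bij, of f] by simp
  also have "\<dots> = sum (\<lambda>s. - f s) (cols S)"
    by (rule sum.cong) (auto simp: f_def rt t_def phi_flip assms)
  also have "\<dots> = - sum f (cols S)" by (simp add: sum_negf)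
  finally show ?thesis unfolding f_def by simp
qed

definition lift :: "nat set \<Rightarrow> nat set \<Rightarrow> ((nat \<Rightarrow> nat) \<Rightarrow> int) \<Rightarrow> (nat \<Rightarrow> nat) \<Rightarrow> int" where
  "lift V S u = (\<lambda>i. if i \<in> cols V then u (restrict i (V - S)) * phi S (restrict i S) else 0)"

lemma restrict_merge_F:
  assumes "e \<in> extensional F"
  shows "(restrict (merge S j s) F = e) \<longleftrightarrow>
     (restrict j (F - S) = restrict e (F - S) \<and> restrict s (F \<inter> S) = restrict e (F \<inter> S))"
proof
  assume h: "restrict (merge S j s) F = e"
  have 1: "restrict j (F - S) = restrict e (F - S)"
  proof
    fix x show "restrict j (F - S) x = restrict e (F - S) x" using fun_cong[OF h, of x] assms
      by (cases "x \<in> S") (auto simp: merge_def extensional_def)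
  qed
  have 2: "restrict s (F \<inter> S) = restrict e (F \<inter> S)"
  proof
    fix x show "restrict s (F \<inter> S) x = restrict e (F \<inter> S) x" using fun_cong[OF h, of x] assms
      by (cases "x \<in> S") (auto simp: merge_def extensional_def)
  qed
  show "restrict j (F - S) = restrict e (F - S) \<and> restrict s (F \<inter> S) = restrict e (F \<inter> S)" using 1 2 by simp
next
  assume h: "restrict j (F - S) = restrict e (F - S) \<and> restrict s (F \<inter> S) = restrict e (F \<inter> S)"
  show "restrict (merge S j s) F = e"
  proof
    fix x show "restrict (merge S j s) F x = e x"
      using fun_cong[OF conjunct1[OF h], of x] fun_cong[OF conjunct2[OF h], of x] assms
      by (cases "x \<in> S"; cases "x \<in> F") (auto simp: merge_def extensional_def)
  qed
qed

lemma lift_kernel: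
  assumes sc: "simplicial_complex V C" and fin: "finite V" and SC: "S \<in> C"
    and ku: "in_kernel (V - S) (link S C) u"
  shows "in_kernel V C (lift V S u)"
  unfolding in_kernel_def
proof (intro conjI allI impI ballI)
  fix x assume "x \<notin> cols V" then show "lift V S u x = 0" by (simp add: lift_def)
next
  fix F :: "nat set" and e :: "nat \<Rightarrow> nat" assume F: "F \<in> facets C" and e: "e \<in> PiE F (\<lambda>_. {1,2})"
  have SV: "S \<subseteq> V" using sc SC unfolding simplicial_complex_def by auto
  have finS: "finite S" using SV fin finite_subset by auto
  have exF: "e \<in> extensional F" using e by (simp add: PiE_def)
  define A where "A = (\<lambda>j. restrict j (F - S) = restrict e (F - S))"
  define B where "B = (\<lambda>s. restrict s (F \<inter> S) = restrict e (F \<inter> S))"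
  have "(\<Sum>i\<in>cols V. (if restrict i F = e then lift V S u i else 0))
     = (\<Sum>j\<in>cols (V - S). \<Sum>s\<in>cols S. (if restrict (merge S j s) F = e then lift V S u (merge S j s) else 0))"
    by (rule sum_cols_split[OF SV fin])
  also have "\<dots> = (\<Sum>j\<in>cols (V - S). \<Sum>s\<in>cols S. (if A j then u j else 0) * (if B s then phi S s else 0))"
    apply (rule sum.cong[OF refl])+
    using SV by (auto simp: restrict_merge_F[OF exF] A_def B_def lift_def merge_cols restrict_merge_W restrict_merge_S)
  also have "\<dots> = (\<Sum>j\<in>cols (V - S). (if A j then u j else 0)) * (\<Sum>s\<in>cols S. (if B s then phi S s else 0))"
    by (simp add: sum_product)
  also have "\<dots> = 0"
  proof (cases "S \<subseteq> F")
    case True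
    have "F - S \<in> facets (link S C)" by (rule facet_link_down[OF F True])
    moreover have "restrict e (F - S) \<in> PiE (F - S) (\<lambda>_. {1,2})" using e by auto
    ultimately have "(\<Sum>j\<in>cols (V - S). (if restrict j (F - S) = restrict e (F - S) then u j else 0)) = 0"
      using ku unfolding in_kernel_def by blast
    then show ?thesis unfolding A_def by simp
  next
    case False
    then obtain k where k: "k \<in> S" "k \<notin> F" by auto
    have "(\<Sum>s\<in>cols S. (if B s then phi S s else 0)) = 0"
      unfolding B_def by (rule parity_sum[OF finS k(1)]) (use k in auto)
    then show ?thesis by simp
  qed
  finally show "(\<Sum>i\<in>cols V. (if restrict i F = e then lift V S u i else 0)) = 0" .
qed

lemma kernel_supp_cols: "in_kernel V C v \<Longrightarrow> supp v \<subseteq> cols V"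
  unfolding in_kernel_def supp_def by auto

lemma circuit_ratio:
  assumes cu: "circuit W L u" and kv: "in_kernel W L v" and sv: "supp v \<subseteq> supp u" and x0: "u x0 \<noteq> 0"
  shows "u x0 * v j = v x0 * u j"
proof -
  define z where "z = (\<lambda>x. u x0 * v x + (- v x0) * u x)"
  have kz: "in_kernel W L z" unfolding z_def
    by (rule in_kernel_lin[OF kv]) (use cu in \<open>simp add: circuit_def\<close>)
  have "supp z \<subseteq> supp u - {x0}"
  proof
    fix x assume "x \<in> supp z"
    then have "z x \<noteq> 0" unfolding supp_def by simp
    moreover have "x \<noteq> x0" using \<open>z x \<noteq> 0\<close> unfolding z_def by (auto simp: algebra_simps)
    moreover have "u x \<noteq> 0"
    proof
      assume "u x = 0"
      then have "v x = 0" using sv unfolding supp_def by auto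
      then show False using \<open>z x \<noteq> 0\<close> \<open>u x = 0\<close> unfolding z_def by simp
    qed
    ultimately show "x \<in> supp u - {x0}" unfolding supp_def by simp
  qed
  then have "supp z \<subset> supp u" using x0 unfolding supp_def by auto
  then have "supp z = {}" using cu kz unfolding circuit_def by blast
  then have "z j = 0" unfolding supp_def by auto
  then show ?thesis unfolding z_def by (simp add: algebra_simps)
qed

lemma phi_nz: "phi S s \<noteq> 0" unfolding phi_def by simp

theorem corollary3p10:
  fixes n :: nat and C :: "nat set set" and S :: "nat set"
  assumes "simplicial_complex {1..n} C"
    and "unimodular_complex {1..n} C"
    and "S \<in> C"
  shows "unimodular_complex ({1..n} - S) (link S C)"
  unfolding unimodular_complex_def
proof (rule allI, rule impI)
  define V where "V = {1..n}"
  define W where "W = V - S"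
  have sc: "simplicial_complex V C" and um: "unimodular_complex V C" using assms V_def by auto
  have fin: "finite V" unfolding V_def by simp
  have SV: "S \<subseteq> V" using sc assms(3) unfolding simplicial_complex_def by auto
  fix u assume cu0: "circuit ({1..n} - S) (link S C) u"
  then have cu: "circuit W (link S C) u" unfolding W_def V_def .
  have ku: "in_kernel W (link S C) u" using cu unfolding circuit_def by simp
  define U where "U = lift V S u"
  have kU: "in_kernel V C U" unfolding U_def W_def
    by (rule lift_kernel[OF sc fin assms(3)]) (use ku W_def in simp)
  have suppU: "U i \<noteq> 0 \<longleftrightarrow> i \<in> cols V \<and> u (restrict i W) \<noteq> 0" for i
    unfolding U_def lift_def W_def using phi_nz by auto
  obtain x0 where x0: "u x0 \<noteq> 0" using cu unfolding circuit_def supp_def by auto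
  have x0c: "x0 \<in> cols W" using x0 ku unfolding in_kernel_def by auto
  define s0 where "s0 = (\<lambda>k. if k \<in> S then (1::nat) else undefined)"
  have s0c: "s0 \<in> cols S" unfolding s0_def cols_def by auto
  have "U (merge S x0 s0) \<noteq> 0"
    using suppU merge_cols[OF SV x0c[unfolded W_def] s0c] restrict_merge_W[OF x0c[unfolded W_def]] x0 W_def by auto
  then have PU: "in_kernel V C U \<and> supp U \<noteq> {} \<and> supp U \<subseteq> supp U" using kU unfolding supp_def by auto
  obtain v where Pv: "in_kernel V C v \<and> supp v \<noteq> {} \<and> supp v \<subseteq> supp U"
    and vmin: "\<forall>v'. in_kernel V C v' \<and> supp v' \<noteq> {} \<and> supp v' \<subseteq> supp U \<longrightarrow> card (supp v) \<le> card (supp v')"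
    using ex_has_least_nat[where P="\<lambda>v. in_kernel V C v \<and> supp v \<noteq> {} \<and> supp v \<subseteq> supp U" and m="\<lambda>v. card (supp v)", OF PU]
    by blast
  have kv: "in_kernel V C v" using Pv by simp
  have fincols: "finite (cols V)" by (rule finite_cols[OF fin])
  define g where "g = Gcd (v ` cols V)"
  have vdvd: "g dvd v i" for i
  proof (cases "i \<in> cols V")
    case True then show ?thesis unfolding g_def by (simp add: Gcd_dvd)
  next
    case False then have "v i = 0" using kv unfolding in_kernel_def by auto
    then show ?thesis by simp
  qed
  have gnz: "g \<noteq> 0"
  proof
    assume "g = 0"
    then have "v ` cols V \<subseteq> {0}" unfolding g_def by simp
    then have "supp v = {}" using kernel_supp_cols[OF kv] unfolding supp_def by auto
    then show False using Pv by simp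
  qed
  have gpos: "g \<ge> 0" unfolding g_def by simp
  define w where "w = (\<lambda>i. v i div g)"
  have vw: "v i = g * w i" for i unfolding w_def using vdvd[of i] by simp
  have wv: "w i \<noteq> 0 \<longleftrightarrow> v i \<noteq> 0" for i using vw[of i] gnz by auto
  have suppw: "supp w = supp v" unfolding supp_def using wv by auto
  have kw: "in_kernel V C w" unfolding in_kernel_def
  proof (intro conjI allI impI ballI)
    fix x assume "x \<notin> cols V" then show "w x = 0" using kv unfolding in_kernel_def w_def by simp
  next
    fix F :: "nat set" and e :: "nat \<Rightarrow> nat" assume F: "F \<in> facets C" and e: "e \<in> PiE F (\<lambda>_. {1,2})"
    have "(\<Sum>i\<in>cols V. (if restrict i F = e then v i else 0)) = 0" using kv F e unfolding in_kernel_def by blast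
    moreover have "(\<Sum>i\<in>cols V. (if restrict i F = e then v i else 0)) = g * (\<Sum>i\<in>cols V. (if restrict i F = e then w i else 0))"
      by (simp add: sum_distrib_left vw if_distrib cong: if_cong)
    ultimately show "(\<Sum>i\<in>cols V. (if restrict i F = e then w i else 0)) = 0" using gnz by simp
  qed
  have gcdw: "Gcd (w ` cols V) = 1"
  proof -
    have eqv: "v ` cols V = (*) g ` (w ` cols V)" by (auto simp: vw image_image)
    have "g = Gcd ((*) g ` (w ` cols V))" unfolding g_def[symmetric] eqv[symmetric] ..
    also have "\<dots> = normalize (g * Gcd (w ` cols V))" by (rule Gcd_mult)
    also have "\<dots> = g * Gcd (w ` cols V)" using gpos by (simp add: abs_mult)
    finally show ?thesis using gnz by simp
  qed
  have finsupp: "finite (supp v')" if "in_kernel V C v'" for v'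
    using kernel_supp_cols[OF that] fincols finite_subset by auto
  have cw: "circuit V C w" unfolding circuit_def
  proof (intro conjI)
    show "in_kernel V C w" by (rule kw)
    show "supp w \<noteq> {}" using Pv suppw by simp
    show "Gcd (w ` cols V) = 1" by (rule gcdw)
    show "\<not> (\<exists>v'. in_kernel V C v' \<and> supp v' \<noteq> {} \<and> supp v' \<subset> supp w)"
    proof
      assume "\<exists>v'. in_kernel V C v' \<and> supp v' \<noteq> {} \<and> supp v' \<subset> supp w"
      then obtain v' where v': "in_kernel V C v'" "supp v' \<noteq> {}" "supp v' \<subset> supp v" using suppw by auto
      have "card (supp v') < card (supp v)" by (rule psubset_card_mono[OF finsupp[OF kv] v'(3)])
      moreover have "card (supp v) \<le> card (supp v')" using vmin v' Pv by auto
      ultimately show False by simp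
    qed
  qed
  have w1: "w x \<in> {-1, 0, 1}" for x using um cw unfolding unimodular_complex_def by blast
  obtain i0 where i0: "w i0 \<noteq> 0" using Pv suppw unfolding supp_def by auto
  have i0c: "i0 \<in> cols V" using i0 kw unfolding in_kernel_def by auto
  define j1 where "j1 = restrict i0 W"
  define s1 where "s1 = restrict i0 S"
  have i0m: "merge S j1 s1 = i0" unfolding j1_def s1_def W_def by (rule merge_restrict[OF SV i0c])
  have s1c: "s1 \<in> cols S" unfolding s1_def using restrict_cols[OF i0c SV] .
  have j1c: "j1 \<in> cols W" unfolding j1_def W_def using restrict_cols[OF i0c] by auto
  have suppwU: "w i \<noteq> 0 \<Longrightarrow> U i \<noteq> 0" for i using Pv suppw unfolding supp_def by auto
  have uj1: "u j1 \<noteq> 0" using suppwU[OF i0] suppU j1_def by auto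
  define ws where "ws = (\<lambda>j. if j \<in> cols (V - S) then w (merge S j s1) else 0)"
  have kws: "in_kernel W (link S C) ws" unfolding ws_def W_def by (rule fiber_kernel[OF sc fin SV kw s1c])
  have sws: "supp ws \<subseteq> supp u"
  proof
    fix j assume "j \<in> supp ws"
    then have j: "j \<in> cols W" "w (merge S j s1) \<noteq> 0" unfolding supp_def ws_def W_def by (auto split: if_splits)
    then have "U (merge S j s1) \<noteq> 0" using suppwU by blast
    then have "u (restrict (merge S j s1) W) \<noteq> 0" using suppU by blast
    then show "j \<in> supp u" using restrict_merge_W[OF j(1)[unfolded W_def]] W_def unfolding supp_def by simp
  qed
  have ratio: "u j1 * ws j = ws j1 * u j" for j by (rule circuit_ratio[OF cu kws sws uj1])
  have wsj1: "ws j1 = w i0" using j1c i0m unfolding ws_def W_def by simp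
  have wsj1sq: "ws j1 * ws j1 = 1" using wsj1 w1[of i0] i0 by auto
  have uj: "u j = ws j1 * u j1 * ws j" for j
  proof -
    have "ws j1 * (u j1 * ws j) = ws j1 * (ws j1 * u j)" using ratio[of j] by simp
    also have "\<dots> = u j" using wsj1sq by (simp add: mult.assoc[symmetric])
    finally show ?thesis by (simp add: mult_ac)
  qed
  have "u j1 dvd Gcd (u ` cols W)"
  proof (rule Gcd_greatest)
    fix b assume "b \<in> u ` cols W"
    then obtain j where "b = u j" by auto
    then show "u j1 dvd b" using uj[of j] by simp
  qed
  then have "u j1 dvd 1" using cu unfolding circuit_def by simp
  then have au: "\<bar>u j1\<bar> = 1" by simp
  have wsx: "ws x \<in> {-1, 0, 1}" for x unfolding ws_def using w1 by auto
  show "\<forall>x. u x \<in> {-1, 0, 1}"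
  proof
    fix x
    have a: "ws j1 = 1 \<or> ws j1 = -1" using wsj1 w1[of i0] i0 by auto
    have b: "u j1 = 1 \<or> u j1 = -1" using au by auto
    have "ws j1 * u j1 = 1 \<or> ws j1 * u j1 = -1" using a b by auto
    then show "u x \<in> {-1, 0, 1}" using uj[of x] wsx[of x] by auto
  qed
qed

end
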